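(* Let $F=\{T_1,\dots,T_n\}$ be a finite family of reduction operators relative to a well-ordered set $(G,<)$. Define $B_1=\emptyset$ and, for $2\le i\le n$, \[B_i=B_{i-1}\cup\{s_{i,g_0}\mid g_0\in\mathrm{red}(U_{i-1}\vee T_i)\},\] with $U_{i-1}$ and $s_{i,g_0}$ as defined in the context. Then $B_n$ is a basis of $\mathrm{syz}(F)$.
   Context: Let $\mathbb{K}$ be a field, $(G,<)$ a well-ordered set and $\mathbb{K}G$ the vector space with basis $G$. For $v\neq 0$, $\mathrm{lt}(v)$ is the greatest element of $G$ appearing with nonzero coefficient in $v$. Extend $<$ to $\mathbb{K}G$: $u<v$ if $u=0$ and $v\neq0$, or if $\mathrm{lt}(u)<\mathrm{lt}(v)$; $u\le v$ means $u<v$ or $u=v$. A reduction operator is an idempotent linear endomorphism $T$ of $\mathbb{K}G$ with $T(g)\le g$ for all $g\in G$; $\mathrm{red}(T)=\{g\in G\mid T(g)\neq g\}$. The elements $g-T(g)$, $g\in\mathrm{red}(T)$, form a basis of $\ker T$; the expression of $v\in\ker T$ in this basis is its $T$-decomposition. For every subspace $V$ there is a unique reduction operator $\ker^{-1}(V)$ with kernel $V$; $T\wedge T'=\ker^{-1}(\ker T+\ker T')$, $T\vee T'=\ker^{-1}(\ker T\cap\ker T')$, and for a finite family $\wedge\{T_1,\dots,T_k\}=T_1\wedge\dots\wedge T_k=\ker^{-1}(\sum\ker T_j)$. For a finite family $F'=\{T_1,\dots,T_k\}$: $\mathbf{ker}(F')=\ker T_1\times\dots\times\ker T_k$; $\pi_{F'}(v_1,\dots,v_k)=v_1+\dots+v_k\in\ker(\wedge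 F')$; $\mathrm{syz}(F')=\ker\pi_{F'}$. For $1\le j\le k$ and $g\in\mathrm{red}(T_j)$, $e_{j,g}$ is the tuple with $g-T_j(g)$ at position $j$ and $0$ elsewhere; these form a basis of $\mathbf{ker}(F')$, well-ordered by $e_{j,g}\sqsubset e_{j',g'}$ iff $j<j'$, or $j=j'$ and $g<g'$. The leading term of a nonzero element of $\mathbf{ker}(F')$ is the $\sqsubset$-greatest $e_{j,g}$ in its expansion, and $\mathrm{lt}(\mathrm{syz}(F'))$ is the set of leading terms of nonzero syzygies. Every $v\in\ker(\wedge F')$ has a unique expression $v=\sum\lambda_{j,g}(g-T_j(g))$ with sum over pairs with $g\in\mathrm{red}(T_j)$ and $e_{j,g}\notin\mathrm{lt}(\mathrm{syz}(F'))$: its canonical decomposition with respect to $F'$. For $2\le i\le n$ let $U_{i-1}=T_1\wedge\dots\wedge T_{i-1}$. For $g_0\in\mathrm{red}(U_{i-1}\vee T_i)$ let $v_{i,g_0}=g_0-(U_{i-1}\vee T_i)(g_0)$, which lies in $\ker U_{i-1}\cap\ker T_i$. Let $\sum_{j,g'}\lambda_{j,g'}(g'-T_j(g'))$ be its canonical decomposition with respect to $\{T_1,\dots,T_{i-1}\}$ and $\sum_g\lambda_g(g-T_i(g))$ its $T_i$-decomposition, and set $s_{i,g_0}=\sum_g\lambda_g e_{i,g}-\sum_{j,g'}\lambda_{j,g'}e_{j,g'}\in\mathbf{ker}(F)$, where the $e_{j,g}$ are viewed in $\mathbf{ker}(F)=\ker T_1\times\dots\times\ker T_n$. *)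

theory Defs
  imports "HOL-Library.Poly_Mapping" "HOL-Library.Function_Algebras" HOL.Modules
begin

text \<open>The vector space KG is modelled as the type of finitely supported functions
  finitely supported functions; the basis element g is rdelta g.\<close>

definition smul :: "'k::field \<Rightarrow> ('g \<Rightarrow>\<^sub>0 'k) \<Rightarrow> ('g \<Rightarrow>\<^sub>0 'k)" where
  "smul c v = Poly_Mapping.map (\<lambda>x. c * x) v"

definition rdelta :: "'g \<Rightarrow> ('g \<Rightarrow>\<^sub>0 'k::field)" where
  "rdelta g = Poly_Mapping.single g 1"

definition klinear :: "(('g \<Rightarrow>\<^sub>0 'k::field) \<Rightarrow> ('g \<Rightarrow>\<^sub>0 'k)) \<Rightarrow> bool" where
  "klinear T \<longleftrightarrow> (\<forall>u v. T (u + v) = T u + T v) \<and> (\<forall>c v. T (smul c v) = smul c (T v))"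

definition rlt :: "('g::wellorder \<Rightarrow>\<^sub>0 'k::field) \<Rightarrow> 'g" where
  "rlt v = Max (Poly_Mapping.keys v)"

definition vless :: "('g::wellorder \<Rightarrow>\<^sub>0 'k::field) \<Rightarrow> ('g \<Rightarrow>\<^sub>0 'k) \<Rightarrow> bool" where
  "vless u v \<longleftrightarrow> (u = 0 \<and> v \<noteq> 0) \<or> (u \<noteq> 0 \<and> v \<noteq> 0 \<and> rlt u < rlt v)"

definition vle :: "('g::wellorder \<Rightarrow>\<^sub>0 'k::field) \<Rightarrow> ('g \<Rightarrow>\<^sub>0 'k) \<Rightarrow> bool" where
  "vle u v \<longleftrightarrow> vless u v \<or> u = v"

definition reduction_op :: "(('g::wellorder \<Rightarrow>\<^sub>0 'k::field) \<Rightarrow> ('g \<Rightarrow>\<^sub>0 'k)) \<Rightarrow> bool" where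
  "reduction_op T \<longleftrightarrow> klinear T \<and> (\<forall>v. T (T v) = T v) \<and> (\<forall>g. vle (T (rdelta g)) (rdelta g))"

definition red :: "(('g::wellorder \<Rightarrow>\<^sub>0 'k::field) \<Rightarrow> ('g \<Rightarrow>\<^sub>0 'k)) \<Rightarrow> 'g set" where
  "red T = {g. T (rdelta g) \<noteq> rdelta g}"

definition kerR :: "(('g \<Rightarrow>\<^sub>0 'k::field) \<Rightarrow> ('g \<Rightarrow>\<^sub>0 'k)) \<Rightarrow> ('g \<Rightarrow>\<^sub>0 'k) set" where
  "kerR T = {v. T v = 0}"

definition kinv :: "('g::wellorder \<Rightarrow>\<^sub>0 'k::field) set \<Rightarrow> (('g \<Rightarrow>\<^sub>0 'k) \<Rightarrow> ('g \<Rightarrow>\<^sub>0 'k))" where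
  "kinv V = (THE T. reduction_op T \<and> kerR T = V)"

definition rjoin :: "(('g::wellorder \<Rightarrow>\<^sub>0 'k::field) \<Rightarrow> ('g \<Rightarrow>\<^sub>0 'k)) \<Rightarrow> (('g \<Rightarrow>\<^sub>0 'k) \<Rightarrow> ('g \<Rightarrow>\<^sub>0 'k))
    \<Rightarrow> (('g \<Rightarrow>\<^sub>0 'k) \<Rightarrow> ('g \<Rightarrow>\<^sub>0 'k))" where
  "rjoin T T' = kinv (kerR T \<inter> kerR T')"

definition meet_fam :: "(nat \<Rightarrow> ('g::wellorder \<Rightarrow>\<^sub>0 'k::field) \<Rightarrow> ('g \<Rightarrow>\<^sub>0 'k)) \<Rightarrow> nat
    \<Rightarrow> (('g \<Rightarrow>\<^sub>0 'k) \<Rightarrow> ('g \<Rightarrow>\<^sub>0 'k))" where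
  "meet_fam T k = kinv {(\<Sum>j\<in>{1..k}. x j) | x. \<forall>j\<in>{1..k}. x j \<in> kerR (T j)}"

definition Tdec :: "(('g::wellorder \<Rightarrow>\<^sub>0 'k::field) \<Rightarrow> ('g \<Rightarrow>\<^sub>0 'k)) \<Rightarrow> ('g \<Rightarrow>\<^sub>0 'k) \<Rightarrow> 'g \<Rightarrow> 'k" where
  "Tdec T v = (THE l. finite {g. l g \<noteq> 0} \<and> {g. l g \<noteq> 0} \<subseteq> red T \<and>
      v = (\<Sum>g\<in>{g. l g \<noteq> 0}. smul (l g) (rdelta g - T (rdelta g))))"

text \<open>Tuples (v_1,...,v_k) are functions nat \<Rightarrow> KG, zero outside {1..k}.\<close>
definition kerF :: "(nat \<Rightarrow> ('g::wellorder \<Rightarrow>\<^sub>0 'k::field) \<Rightarrow> ('g \<Rightarrow>\<^sub>0 'k)) \<Rightarrow> nat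
    \<Rightarrow> (nat \<Rightarrow> ('g \<Rightarrow>\<^sub>0 'k)) set" where
  "kerF T k = {x. (\<forall>j\<in>{1..k}. x j \<in> kerR (T j)) \<and> (\<forall>j. j \<notin> {1..k} \<longrightarrow> x j = 0)}"

definition piF :: "nat \<Rightarrow> (nat \<Rightarrow> ('g \<Rightarrow>\<^sub>0 'k::field)) \<Rightarrow> ('g \<Rightarrow>\<^sub>0 'k)" where
  "piF k x = (\<Sum>j\<in>{1..k}. x j)"

definition syz :: "(nat \<Rightarrow> ('g::wellorder \<Rightarrow>\<^sub>0 'k::field) \<Rightarrow> ('g \<Rightarrow>\<^sub>0 'k)) \<Rightarrow> nat
    \<Rightarrow> (nat \<Rightarrow> ('g \<Rightarrow>\<^sub>0 'k)) set" where
  "syz T k = {x \<in> kerF T k. piF k x = 0}"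

definition tsmul :: "'k::field \<Rightarrow> (nat \<Rightarrow> ('g \<Rightarrow>\<^sub>0 'k)) \<Rightarrow> (nat \<Rightarrow> ('g \<Rightarrow>\<^sub>0 'k))" where
  "tsmul c x = (\<lambda>j. smul c (x j))"

definition eF :: "(nat \<Rightarrow> ('g::wellorder \<Rightarrow>\<^sub>0 'k::field) \<Rightarrow> ('g \<Rightarrow>\<^sub>0 'k)) \<Rightarrow> nat \<Rightarrow> 'g
    \<Rightarrow> (nat \<Rightarrow> ('g \<Rightarrow>\<^sub>0 'k))" where
  "eF T j g = (\<lambda>j'. if j' = j then rdelta g - T j (rdelta g) else 0)"

definition coefF :: "(nat \<Rightarrow> ('g::wellorder \<Rightarrow>\<^sub>0 'k::field) \<Rightarrow> ('g \<Rightarrow>\<^sub>0 'k)) \<Rightarrow> nat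
    \<Rightarrow> (nat \<Rightarrow> ('g \<Rightarrow>\<^sub>0 'k)) \<Rightarrow> nat \<times> 'g \<Rightarrow> 'k" where
  "coefF T k x p = (if fst p \<in> {1..k} then Tdec (T (fst p)) (x (fst p)) (snd p) else 0)"

definition sqless :: "nat \<times> 'g::wellorder \<Rightarrow> nat \<times> 'g \<Rightarrow> bool" where
  "sqless p q \<longleftrightarrow> fst p < fst q \<or> (fst p = fst q \<and> snd p < snd q)"

definition ltF :: "(nat \<Rightarrow> ('g::wellorder \<Rightarrow>\<^sub>0 'k::field) \<Rightarrow> ('g \<Rightarrow>\<^sub>0 'k)) \<Rightarrow> nat
    \<Rightarrow> (nat \<Rightarrow> ('g \<Rightarrow>\<^sub>0 'k)) \<Rightarrow> nat \<times> 'g" where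
  "ltF T k x = (THE p. coefF T k x p \<noteq> 0 \<and> (\<forall>q. coefF T k x q \<noteq> 0 \<longrightarrow> q = p \<or> sqless q p))"

definition ltsyz :: "(nat \<Rightarrow> ('g::wellorder \<Rightarrow>\<^sub>0 'k::field) \<Rightarrow> ('g \<Rightarrow>\<^sub>0 'k)) \<Rightarrow> nat \<Rightarrow> (nat \<times> 'g) set" where
  "ltsyz T k = {ltF T k x | x. x \<in> syz T k \<and> x \<noteq> 0}"

definition candec :: "(nat \<Rightarrow> ('g::wellorder \<Rightarrow>\<^sub>0 'k::field) \<Rightarrow> ('g \<Rightarrow>\<^sub>0 'k)) \<Rightarrow> nat
    \<Rightarrow> ('g \<Rightarrow>\<^sub>0 'k) \<Rightarrow> nat \<times> 'g \<Rightarrow> 'k" where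
  "candec T k v = (THE c. finite {p. c p \<noteq> 0} \<and>
      (\<forall>p. c p \<noteq> 0 \<longrightarrow> fst p \<in> {1..k} \<and> snd p \<in> red (T (fst p)) \<and> p \<notin> ltsyz T k) \<and>
      v = (\<Sum>p\<in>{p. c p \<noteq> 0}. smul (c p) (rdelta (snd p) - T (fst p) (rdelta (snd p)))))"

definition vvec :: "(nat \<Rightarrow> ('g::wellorder \<Rightarrow>\<^sub>0 'k::field) \<Rightarrow> ('g \<Rightarrow>\<^sub>0 'k)) \<Rightarrow> nat \<Rightarrow> 'g \<Rightarrow> ('g \<Rightarrow>\<^sub>0 'k)" where
  "vvec T i g0 = rdelta g0 - rjoin (meet_fam T (i - 1)) (T i) (rdelta g0)"

definition svec :: "(nat \<Rightarrow> ('g::wellorder \<Rightarrow>\<^sub>0 'k::field) \<Rightarrow> ('g \<Rightarrow>\<^sub>0 'k)) \<Rightarrow> nat \<Rightarrow> 'g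
    \<Rightarrow> (nat \<Rightarrow> ('g \<Rightarrow>\<^sub>0 'k))" where
  "svec T i g0 =
     (let v = vvec T i g0; l = Tdec (T i) v; c = candec T (i - 1) v in
       (\<Sum>g\<in>{g. l g \<noteq> 0}. tsmul (l g) (eF T i g))
       - (\<Sum>p\<in>{p. c p \<noteq> 0}. tsmul (c p) (eF T (fst p) (snd p))))"

primrec Bset :: "(nat \<Rightarrow> ('g::wellorder \<Rightarrow>\<^sub>0 'k::field) \<Rightarrow> ('g \<Rightarrow>\<^sub>0 'k)) \<Rightarrow> nat
    \<Rightarrow> (nat \<Rightarrow> ('g \<Rightarrow>\<^sub>0 'k)) set" where
  "Bset T 0 = {}"
| "Bset T (Suc i) = (if i = 0 then {} else
      Bset T i \<union> {svec T (Suc i) g0 | g0. g0 \<in> red (rjoin (meet_fam T i) (T (Suc i)))})"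

end

theory Submission
  imports Defs
begin


abbreviation (input) lk where "lk \<equiv> poly_mapping.lookup"
abbreviation (input) pk where "pk \<equiv> Poly_Mapping.keys"

lemma lookup_smul[simp]: "lk (smul c v) x = c * lk v x"
  by (simp add: smul_def Poly_Mapping.map.rep_eq when_def)

lemma lookup_rdelta: "lk (rdelta g :: 'g \<Rightarrow>\<^sub>0 'k::field) x = (if x = g then 1 else 0)"
  by (simp add: rdelta_def lookup_single when_def)

lemma keys_rdelta[simp]: "pk (rdelta g :: 'g \<Rightarrow>\<^sub>0 'k::field) = {g}"
  by (simp add: rdelta_def)

lemma rdelta_nz[simp]: "rdelta g \<noteq> (0 :: 'g \<Rightarrow>\<^sub>0 'k::field)"
  using keys_rdelta[of g] by (metis empty_not_insert keys_zero)

interpretation KG: module "smul :: 'k::field \<Rightarrow> ('g \<Rightarrow>\<^sub>0 'k) \<Rightarrow> _"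
  by standard (auto intro!: poly_mapping_eqI simp: lookup_add algebra_simps)

lemma keys_smul: "pk (smul c v) \<subseteq> pk v"
  by (auto simp: in_keys_iff)

lemma keys_diff: "pk (u - v) \<subseteq> pk u \<union> pk v"
  by (auto simp: in_keys_iff lookup_minus)

lemma expand: "(v :: 'g \<Rightarrow>\<^sub>0 'k::field) = (\<Sum>x\<in>pk v. smul (lk v x) (rdelta x))"
proof (rule poly_mapping_eqI)
  fix k
  show "lk v k = lk (\<Sum>x\<in>pk v. smul (lk v x) (rdelta x)) k"
    by (cases "k \<in> pk v") (simp_all add: lookup_sum lookup_rdelta in_keys_iff if_distrib[where f="\<lambda>y. _ * y"] sum.delta cong: if_cong)
qed

lemma expand_sup: "finite S \<Longrightarrow> pk v \<subseteq> S \<Longrightarrow> (v :: 'g \<Rightarrow>\<^sub>0 'k::field) = (\<Sum>x\<in>S. smul (lk v x) (rdelta x))"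
  apply (subst expand)
  apply (rule sum.mono_neutral_left)
  by (auto simp: in_keys_iff intro!: poly_mapping_eqI)

locale lin =
  fixes T :: "('g \<Rightarrow>\<^sub>0 'k::field) \<Rightarrow> ('g \<Rightarrow>\<^sub>0 'k)"
  assumes kl: "klinear T"
begin
lemma add: "T (u + v) = T u + T v" using kl by (simp add: klinear_def)
lemma sc: "T (smul c v) = smul c (T v)" using kl by (simp add: klinear_def)
lemma zero[simp]: "T 0 = 0" using sc[of 0 0] by simp
lemma minus: "T (- v) = - T v" using sc[of "-1" v] by (simp add: KG.scale_minus_left[of 1, simplified])
lemma diff: "T (u - v) = T u - T v" using add[of u "-v"] minus by simp
lemma sum: "T (sum f A) = (\<Sum>x\<in>A. T (f x))"
  by (induct A rule: infinite_finite_induct) (simp_all add: add)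
lemma expandT: "T v = (\<Sum>x\<in>pk v. smul (lk v x) (T (rdelta x)))"
  by (subst expand) (simp add: sum sc)
lemma subsp_ker: "KG.subspace (kerR T)"
  by (auto simp: KG.subspace_def kerR_def add sc)
end


lemma rlt_in: "v \<noteq> 0 \<Longrightarrow> rlt v \<in> pk v"
  unfolding rlt_def by (rule Max_in) auto

lemma le_rlt: "x \<in> pk v \<Longrightarrow> x \<le> rlt v"
  unfolding rlt_def by (rule Max_ge) auto

lemma rlt_rdelta[simp]: "rlt (rdelta g :: 'g::wellorder \<Rightarrow>\<^sub>0 'k::field) = g"
  by (simp add: rlt_def)

locale redop = lin T for T :: "('g::wellorder \<Rightarrow>\<^sub>0 'k::field) \<Rightarrow> ('g \<Rightarrow>\<^sub>0 'k)" +
  assumes idem: "T (T v) = T v" and vl: "vle (T (rdelta g)) (rdelta g)"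
begin

lemma nred: "g \<notin> red T \<Longrightarrow> T (rdelta g) = rdelta g"
  by (simp add: red_def)

lemma red_lt: assumes "g \<in> red T" "x \<in> pk (T (rdelta g))" shows "x < g"
proof -
  have ne: "T (rdelta g) \<noteq> rdelta g" using assms(1) by (simp add: red_def)
  hence "vless (T (rdelta g)) (rdelta g)" using vl[of g] by (simp add: vle_def)
  moreover have "T (rdelta g) \<noteq> 0" using assms(2) by auto
  ultimately have "rlt (T (rdelta g)) < g" by (simp add: vless_def)
  thus ?thesis using le_rlt[OF assms(2)] by simp
qed

lemma keys_T_le: "x \<in> pk (T (rdelta g)) \<Longrightarrow> x \<le> g"
  by (cases "g \<in> red T") (auto dest: red_lt simp: nred)

lemma ker_basis: "rdelta g - T (rdelta g) \<in> kerR T"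
  by (simp add: kerR_def diff idem)

lemma ker_T: "v - T v \<in> kerR T"
  by (simp add: kerR_def diff idem)

lemma keys_T_red: "pk (T w) \<inter> red T = {}"
proof (rule ccontr)
  define z where "z = T w"
  have Tz: "T z = z" by (simp add: z_def idem)
  assume "pk (T w) \<inter> red T \<noteq> {}"
  hence ne: "pk z \<inter> red T \<noteq> {}" by (simp add: z_def)
  define h where "h = Max (pk z \<inter> red T)"
  have hin: "h \<in> pk z \<inter> red T" unfolding h_def by (rule Max_in) (use ne in auto)
  have hmax: "x \<in> pk z \<inter> red T \<Longrightarrow> x \<le> h" for x unfolding h_def by (rule Max_ge) auto
  have "lk (T z) h = (\<Sum>x\<in>pk z. lk z x * lk (T (rdelta x)) h)"
    by (subst expandT) (simp add: lookup_sum)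
  also have "\<dots> = 0"
  proof (rule sum.neutral, rule ballI)
    fix x assume x: "x \<in> pk z"
    have "lk (T (rdelta x)) h = 0"
    proof (cases "x \<in> red T")
      case True
      hence "x \<le> h" using x hmax by auto
      thus ?thesis using red_lt[OF True, of h] by (force simp: in_keys_iff)
    next
      case False
      thus ?thesis using hin by (auto simp: nred lookup_rdelta)
    qed
    thus "lk z x * lk (T (rdelta x)) h = 0" by simp
  qed
  finally show False using hin Tz by (auto simp: in_keys_iff)
qed

lemma ker_dec: assumes "v \<in> kerR T"
  shows "v = (\<Sum>g\<in>pk v \<inter> red T. smul (lk v g) (rdelta g - T (rdelta g)))"
proof -
  have "v = v - T v" using assms by (simp add: kerR_def)
  also have "\<dots> = (\<Sum>x\<in>pk v. smul (lk v x) (rdelta x - T (rdelta x)))"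
    apply (subst (1) expand) apply (subst expandT)
    by (simp add: sum_subtractf KG.scale_right_diff_distrib)
  also have "\<dots> = (\<Sum>g\<in>pk v \<inter> red T. smul (lk v g) (rdelta g - T (rdelta g)))"
    by (rule sum.mono_neutral_right) (auto simp: nred)
  finally show ?thesis .
qed

lemma dec_lookup: assumes "finite S" "S \<subseteq> red T" "h \<in> red T"
  shows "lk (\<Sum>g\<in>S. smul (l g) (rdelta g - T (rdelta g))) h = (if h \<in> S then l h else 0)"
proof -
  have "(\<Sum>g\<in>S. smul (l g) (rdelta g - T (rdelta g))) =
        (\<Sum>g\<in>S. smul (l g) (rdelta g)) - T (\<Sum>g\<in>S. smul (l g) (rdelta g))"
    by (simp add: sum sc sum_subtractf KG.scale_right_diff_distrib)
  moreover have "lk (T (\<Sum>g\<in>S. smul (l g) (rdelta g))) h = 0"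
    using keys_T_red[of "\<Sum>g\<in>S. smul (l g) (rdelta g)"] assms(3) by (auto simp: in_keys_iff)
  moreover have "lk (\<Sum>g\<in>S. smul (l g) (rdelta g)) h = (if h \<in> S then l h else 0)"
    using assms(1) by (simp add: lookup_sum lookup_rdelta if_distrib[where f="\<lambda>y. _ * y"] cong: if_cong)
  ultimately show ?thesis by (simp add: lookup_minus)
qed

lemma Tdec_eq: assumes "v \<in> kerR T"
  shows "Tdec T v = (\<lambda>g. if g \<in> red T then lk v g else 0)"
  unfolding Tdec_def
proof (rule the_equality)
  have e: "{g. (if g \<in> red T then lk v g else 0) \<noteq> 0} = pk v \<inter> red T"
    by (auto simp: in_keys_iff)
  show "finite {g. (if g \<in> red T then lk v g else 0) \<noteq> 0} \<and>
    {g. (if g \<in> red T then lk v g else 0) \<noteq> 0} \<subseteq> red T \<and>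
    v = (\<Sum>g\<in>{g. (if g \<in> red T then lk v g else 0) \<noteq> 0}. smul (if g \<in> red T then lk v g else 0) (rdelta g - T (rdelta g)))"
    unfolding e using ker_dec[OF assms] by auto
next
  fix l assume l: "finite {g. l g \<noteq> 0} \<and> {g. l g \<noteq> 0} \<subseteq> red T \<and>
      v = (\<Sum>g\<in>{g. l g \<noteq> 0}. smul (l g) (rdelta g - T (rdelta g)))"
  show "l = (\<lambda>g. if g \<in> red T then lk v g else 0)"
  proof
    fix g show "l g = (if g \<in> red T then lk v g else 0)"
    proof (cases "g \<in> red T")
      case True
      have "lk v g = (if g \<in> {g. l g \<noteq> 0} then l g else 0)"
        using l dec_lookup[of "{g. l g \<noteq> 0}" g l] True by metis
      thus ?thesis using True by auto
    next
      case False thus ?thesis using l by auto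
    qed
  qed
qed

end

lemma redopI: "reduction_op T \<Longrightarrow> redop T"
  unfolding reduction_op_def redop_def redop_axioms_def lin_def by auto

lemma redop_reduction_op: "redop T \<Longrightarrow> reduction_op T"
  unfolding reduction_op_def redop_def redop_axioms_def lin_def by auto


context redop begin
lemma lead_red: assumes "v \<in> kerR T" "v \<noteq> 0" shows "rlt v \<in> red T"
proof (rule ccontr)
  define h where "h = rlt v"
  assume "rlt v \<notin> red T"
  hence hn: "h \<notin> red T" by (simp add: h_def)
  have hk: "h \<in> pk v" using rlt_in[OF assms(2)] by (simp add: h_def)
  have "lk (T v) h = (\<Sum>x\<in>pk v. lk v x * lk (T (rdelta x)) h)"
    by (subst expandT) (simp add: lookup_sum)
  also have "\<dots> = (\<Sum>x\<in>pk v. if x = h then lk v x else 0)"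
  proof (rule sum.cong[OF refl])
    fix x assume x: "x \<in> pk v"
    have xl: "x \<le> h" using le_rlt[OF x] by (simp add: h_def)
    show "lk v x * lk (T (rdelta x)) h = (if x = h then lk v x else 0)"
    proof (cases "x = h")
      case True thus ?thesis using hn by (simp add: nred lookup_rdelta)
    next
      case False
      hence "x < h" using xl by simp
      hence "lk (T (rdelta x)) h = 0" using keys_T_le[of h x] by (force simp: in_keys_iff)
      thus ?thesis using False by simp
    qed
  qed
  also have "\<dots> = lk v h" using hk by simp
  finally show False using assms(1) hk by (simp add: kerR_def in_keys_iff)
qed
end

definition LV :: "('g::wellorder \<Rightarrow>\<^sub>0 'k::field) set \<Rightarrow> 'g set" where
  "LV V = {rlt v | v. v \<in> V \<and> v \<noteq> 0}"

lemma lead_vec: assumes V: "KG.subspace V" and g: "g \<in> LV V"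
  shows "\<exists>y\<in>V. lk y g = 1 \<and> (\<forall>x\<in>pk y. x \<le> g)"
proof -
  obtain v where v: "v \<in> V" "v \<noteq> 0" "rlt v = g" using g by (auto simp: LV_def)
  have nz: "lk v g \<noteq> 0" using rlt_in[OF v(2)] v(3) by (simp add: in_keys_iff)
  let ?y = "smul (inverse (lk v g)) v"
  have "?y \<in> V" using KG.subspace_scale[OF V v(1)] .
  moreover have "lk ?y g = 1" using nz by simp
  moreover have "\<forall>x\<in>pk ?y. x \<le> g"
  proof
    fix x assume "x \<in> pk ?y"
    hence "x \<in> pk v" using keys_smul[of "inverse (lk v g)" v] by blast
    thus "x \<le> g" using le_rlt[of x v] v(3) by simp
  qed
  ultimately show ?thesis by blast
qed

lemma NF_ex: fixes V :: "('g::wellorder \<Rightarrow>\<^sub>0 'k::field) set" and w :: "'g \<Rightarrow>\<^sub>0 'k"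
  assumes V: "KG.subspace V"
  shows "\<exists>u\<in>V. pk (w - u) \<inter> LV V = {} \<and> (\<forall>x\<in>pk (w - u). \<exists>y\<in>pk w. x \<le> y)"
proof -
  define C where "C w \<longleftrightarrow> (\<exists>u\<in>V. pk (w - u) \<inter> LV V = {} \<and> (\<forall>x\<in>pk (w - u). \<exists>y\<in>pk w. x \<le> y))" for w :: "'g \<Rightarrow>\<^sub>0 'k"
  have C0: "C w" if "pk w \<inter> LV V = {}" for w :: "'g \<Rightarrow>\<^sub>0 'k"
    unfolding C_def using that KG.subspace_0[OF V] by (intro bexI[of _ 0]) auto
  have main: "\<forall>w::'g \<Rightarrow>\<^sub>0 'k. (\<forall>b\<in>pk w \<inter> LV V. b \<le> h) \<longrightarrow> C w" for h
  proof (induct h rule: less_induct)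
    case (less h)
    have aux: "C w" if wb: "\<forall>b\<in>pk w \<inter> LV V. b < h" for w :: "'g \<Rightarrow>\<^sub>0 'k"
    proof (cases "pk w \<inter> LV V = {}")
      case True thus ?thesis by (rule C0)
    next
      case False
      define h' where "h' = Max (pk w \<inter> LV V)"
      have "h' \<in> pk w \<inter> LV V" unfolding h'_def by (rule Max_in) (use False in auto)
      hence "h' < h" using wb by auto
      moreover have "\<forall>b\<in>pk w \<inter> LV V. b \<le> h'" unfolding h'_def by (auto intro: Max_ge)
      ultimately show ?thesis using less by blast
    qed
    show ?case
    proof (intro allI impI)
      fix w :: "'g \<Rightarrow>\<^sub>0 'k" assume hb: "\<forall>b\<in>pk w \<inter> LV V. b \<le> h"
      show "C w"
      proof (cases "h \<in> pk w \<inter> LV V")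
        case False
        have "\<forall>b\<in>pk w \<inter> LV V. b < h"
        proof
          fix b assume b: "b \<in> pk w \<inter> LV V"
          hence "b \<le> h" "b \<noteq> h" using hb False by auto
          thus "b < h" by simp
        qed
        thus ?thesis by (rule aux)
      next
        case True
        obtain y where y: "y \<in> V" "lk y h = 1" "\<forall>x\<in>pk y. x \<le> h"
          using lead_vec[OF V] True by blast
        define w1 where "w1 = w - smul (lk w h) y"
        have k1: "pk w1 \<subseteq> pk w \<union> pk y" unfolding w1_def using keys_diff[of w "smul (lk w h) y"] keys_smul[of "lk w h" y] by blast
        have "lk w1 h = 0" unfolding w1_def using y(2) by (simp add: lookup_minus)
        have "\<forall>b\<in>pk w1 \<inter> LV V. b < h"
        proof
          fix b assume b: "b \<in> pk w1 \<inter> LV V"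
          have "b \<in> pk w \<or> b \<in> pk y" using b k1 by blast
          hence "b \<le> h" using b hb y(3) by blast
          moreover have "b \<noteq> h" using b \<open>lk w1 h = 0\<close> by (auto simp: in_keys_iff)
          ultimately show "b < h" by simp
        qed
        from aux[OF this] obtain u1 where u1: "u1 \<in> V" "pk (w1 - u1) \<inter> LV V = {}"
          "\<forall>x\<in>pk (w1 - u1). \<exists>y\<in>pk w1. x \<le> y" unfolding C_def by blast
        define u where "u = u1 + smul (lk w h) y"
        have uV: "u \<in> V" unfolding u_def by (intro KG.subspace_add[OF V] u1 KG.subspace_scale[OF V] y)
        have e: "w - u = w1 - u1" unfolding u_def w1_def by (simp add: algebra_simps)
        have "\<forall>x\<in>pk (w - u). \<exists>y\<in>pk w. x \<le> y"
        proof
          fix x assume "x \<in> pk (w - u)"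
          then obtain y' where y': "y' \<in> pk w1" "x \<le> y'" using u1(3) e by auto
          show "\<exists>y\<in>pk w. x \<le> y"
          proof (cases "y' \<in> pk w")
            case True thus ?thesis using y' by blast
          next
            case False
            hence "y' \<le> h" using y' k1 y(3) by auto
            thus ?thesis using True y' by (meson IntD1 order.trans)
          qed
        qed
        thus ?thesis unfolding C_def using uV u1(2) e by (intro bexI[of _ u]) auto
      qed
    qed
  qed
  show ?thesis
  proof (cases "pk w \<inter> LV V = {}")
    case True thus ?thesis using C0 unfolding C_def by blast
  next
    case False
    have "\<forall>b\<in>pk w \<inter> LV V. b \<le> Max (pk w \<inter> LV V)" by (auto intro: Max_ge)
    thus ?thesis using main unfolding C_def by blast
  qed
qed

lemma NF_unique: assumes V: "KG.subspace V"
  and "w - r1 \<in> V" "w - r2 \<in> V" "pk r1 \<inter> LV V = {}" "pk r2 \<inter> LV V = {}"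
  shows "r1 = r2"
proof (rule ccontr)
  assume ne: "r1 \<noteq> r2"
  have d: "r1 - r2 \<in> V" using KG.subspace_diff[OF V assms(3) assms(2)] by (simp add: algebra_simps)
  have nz: "r1 - r2 \<noteq> 0" using ne by simp
  hence "rlt (r1 - r2) \<in> LV V" using d by (auto simp: LV_def)
  moreover have "rlt (r1 - r2) \<in> pk r1 \<union> pk r2" using rlt_in[OF nz] keys_diff[of r1 r2] by blast
  ultimately show False using assms(4,5) by blast
qed

definition NFop :: "('g::wellorder \<Rightarrow>\<^sub>0 'k::field) set \<Rightarrow> ('g \<Rightarrow>\<^sub>0 'k) \<Rightarrow> ('g \<Rightarrow>\<^sub>0 'k)" where
  "NFop V w = w - (SOME u. u \<in> V \<and> pk (w - u) \<inter> LV V = {} \<and> (\<forall>x\<in>pk (w - u). \<exists>y\<in>pk w. x \<le> y))"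

lemma NFop_spec: assumes V: "KG.subspace V"
  shows "w - NFop V w \<in> V" "pk (NFop V w) \<inter> LV V = {}" "\<forall>x\<in>pk (NFop V w). \<exists>y\<in>pk w. x \<le> y"
proof -
  let ?P = "\<lambda>u. u \<in> V \<and> pk (w - u) \<inter> LV V = {} \<and> (\<forall>x\<in>pk (w - u). \<exists>y\<in>pk w. x \<le> y)"
  define s where "s = (SOME u. ?P u)"
  obtain u0 where u0: "u0 \<in> V" "pk (w - u0) \<inter> LV V = {}" "\<forall>x\<in>pk (w - u0). \<exists>y\<in>pk w. x \<le> y"
    using NF_ex[OF V, of w] by (elim bexE conjE)
  have "?P u0" using u0 by (intro conjI)
  hence "?P s" unfolding s_def by (rule someI)
  moreover have "NFop V w = w - s" unfolding NFop_def s_def by (rule refl)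
  ultimately show "w - NFop V w \<in> V" "pk (NFop V w) \<inter> LV V = {}" "\<forall>x\<in>pk (NFop V w). \<exists>y\<in>pk w. x \<le> y"
    by simp_all
qed

lemma NFop_char: assumes V: "KG.subspace V" and "w - r \<in> V" "pk r \<inter> LV V = {}"
  shows "NFop V w = r"
  using NF_unique[OF V NFop_spec(1)[OF V] assms(2) NFop_spec(2)[OF V] assms(3)] .

lemma NFop_redop: fixes V :: "('g::wellorder \<Rightarrow>\<^sub>0 'k::field) set" assumes V: "KG.subspace V" shows "redop (NFop V)" "kerR (NFop V) = V"
proof -
  note sp = NFop_spec[OF V]
  have add: "NFop V (u + v) = NFop V u + NFop V v" for u v
  proof (rule NFop_char[OF V])
    have e: "(u + v) - (NFop V u + NFop V v) = (u - NFop V u) + (v - NFop V v)" by (simp add: algebra_simps)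
    show "u + v - (NFop V u + NFop V v) \<in> V" unfolding e by (rule KG.subspace_add[OF V sp(1) sp(1)])
    show "pk (NFop V u + NFop V v) \<inter> LV V = {}" using keys_add[of "NFop V u" "NFop V v"] sp(2)[of u] sp(2)[of v] by blast
  qed
  have sc: "NFop V (smul c v) = smul c (NFop V v)" for c v
  proof (rule NFop_char[OF V])
    have "smul c v - smul c (NFop V v) = smul c (v - NFop V v)" by (simp add: KG.scale_right_diff_distrib)
    thus "smul c v - smul c (NFop V v) \<in> V" using KG.subspace_scale[OF V sp(1)] by simp
    show "pk (smul c (NFop V v)) \<inter> LV V = {}" using keys_smul[of c "NFop V v"] sp(2)[of v] by blast
  qed
  have idem: "NFop V (NFop V v) = NFop V v" for v
    by (rule NFop_char[OF V]) (simp_all add: KG.subspace_0[OF V] sp(2))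
  have vl: "vle (NFop V (rdelta g)) (rdelta g)" for g
  proof (cases "g \<in> LV V")
    case False
    have "NFop V (rdelta g) = rdelta g"
    proof (rule NFop_char[OF V])
      show "rdelta g - rdelta g \<in> V" by (simp add: KG.subspace_0[OF V])
      show "pk (rdelta g :: 'g \<Rightarrow>\<^sub>0 'k) \<inter> LV V = {}" using False by simp
    qed
    thus ?thesis by (simp add: vle_def)
  next
    case True
    obtain y where y: "y \<in> V" "lk y g = 1" "\<forall>x\<in>pk y. x \<le> g" using lead_vec[OF V True] by blast
    define w' where "w' = rdelta g - y"
    have kw: "x < g" if "x \<in> pk w'" for x
    proof -
      have "x = g \<or> x \<in> pk y" using that keys_diff[of "rdelta g" y] unfolding w'_def by auto
      hence "x \<le> g" using y(3) by blast
      moreover have "lk w' g = 0" using y(2) by (simp add: w'_def lookup_minus lookup_rdelta)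
      hence "x \<noteq> g" using that by (auto simp: in_keys_iff)
      ultimately show ?thesis by simp
    qed
    have "NFop V (rdelta g) = NFop V w'"
    proof (rule NFop_char[OF V])
      have e: "rdelta g - NFop V w' = y + (w' - NFop V w')" by (simp add: w'_def algebra_simps)
      show "rdelta g - NFop V w' \<in> V" unfolding e by (rule KG.subspace_add[OF V y(1) sp(1)])
      show "pk (NFop V w') \<inter> LV V = {}" by (rule sp(2))
    qed
    moreover have "x < g" if "x \<in> pk (NFop V w')" for x
    proof -
      have "\<exists>z\<in>pk w'. x \<le> z" using sp(3)[of w'] that by (rule bspec)
      then obtain z where "z \<in> pk w'" "x \<le> z" by (rule bexE)
      thus ?thesis using kw[of z] by (meson order_le_less_trans)
    qed
    ultimately have lt: "x < g" if "x \<in> pk (NFop V (rdelta g))" for x using that by metis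
    have "vless (NFop V (rdelta g)) (rdelta g)"
    proof (cases "NFop V (rdelta g) = 0")
      case True thus ?thesis by (simp add: vless_def)
    next
      case False
      thus ?thesis using lt[OF rlt_in[OF False]] by (simp add: vless_def)
    qed
    thus ?thesis by (simp add: vle_def)
  qed
  show "redop (NFop V)" unfolding redop_def redop_axioms_def lin_def klinear_def
    by (intro conjI allI add sc idem vl)
  show "kerR (NFop V) = V"
  proof
    show "kerR (NFop V) \<subseteq> V"
    proof
      fix x assume "x \<in> kerR (NFop V)"
      hence "NFop V x = 0" by (simp add: kerR_def)
      thus "x \<in> V" using sp(1)[of x] by simp
    qed
    show "V \<subseteq> kerR (NFop V)"
    proof
      fix w assume "w \<in> V"
      hence "NFop V w = 0" by (intro NFop_char[OF V]) auto
      thus "w \<in> kerR (NFop V)" by (simp add: kerR_def)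
    qed
  qed
qed

lemma kinv_eq: assumes V: "KG.subspace V" shows "kinv V = NFop V"
  unfolding kinv_def
proof (rule the_equality)
  show "reduction_op (NFop V) \<and> kerR (NFop V) = V"
    using NFop_redop[OF V] redop_reduction_op by blast
next
  fix T assume T: "reduction_op T \<and> kerR T = V"
  then interpret redop T by (simp add: redopI)
  show "T = NFop V"
  proof
    fix w
    have "LV V \<subseteq> red T"
    proof
      fix g assume "g \<in> LV V"
      then obtain v where "v \<in> V" "v \<noteq> 0" "g = rlt v" by (auto simp: LV_def)
      thus "g \<in> red T" using lead_red[of v] T by simp
    qed
    hence "pk (T w) \<inter> LV V = {}" using keys_T_red[of w] by blast
    moreover have "w - T w \<in> V" using ker_T[of w] T by simp
    ultimately show "T w = NFop V w" using NFop_char[OF V, of w "T w"] by simp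
  qed
qed

lemma kinv_props: assumes V: "KG.subspace V" shows "redop (kinv V)" "kerR (kinv V) = V"
  using NFop_redop[OF V] kinv_eq[OF V] by auto


lemma fun_diff_apply[simp]: "((f::'a \<Rightarrow> 'b::ab_group_add) - g) x = f x - g x"
  by (simp add: fun_diff_def)

lemma fun_uminus_apply[simp]: "(- (f::'a \<Rightarrow> 'b::ab_group_add)) x = - f x"
  by (simp add: fun_Compl_def)

lemma sum_fun_apply: "(sum f A :: 'a \<Rightarrow> 'b::comm_monoid_add) x = (\<Sum>a\<in>A. f a x)"
  by (induct A rule: infinite_finite_induct) auto

lemma tsmul_apply[simp]: "tsmul c x j = smul c (x j)"
  by (simp add: tsmul_def)

interpretation TP: module "tsmul :: 'k::field \<Rightarrow> (nat \<Rightarrow> ('g \<Rightarrow>\<^sub>0 'k)) \<Rightarrow> _"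
  by standard (auto simp: tsmul_def fun_eq_iff KG.scale_right_distrib KG.scale_left_distrib)

definition sumker :: "(nat \<Rightarrow> ('g::wellorder \<Rightarrow>\<^sub>0 'k::field) \<Rightarrow> ('g \<Rightarrow>\<^sub>0 'k)) \<Rightarrow> nat \<Rightarrow> ('g \<Rightarrow>\<^sub>0 'k) set" where
  "sumker T k = {(\<Sum>j\<in>{1..k}. x j) | x. \<forall>j\<in>{1..k}. x j \<in> kerR (T j)}"

lemma sumker_subspace: fixes T :: "nat \<Rightarrow> ('g::wellorder \<Rightarrow>\<^sub>0 'k::field) \<Rightarrow> ('g \<Rightarrow>\<^sub>0 'k)"
  assumes R: "\<And>j. j \<in> {1..k} \<Longrightarrow> redop (T j)"
  shows "KG.subspace (sumker T k)"
proof (rule KG.subspaceI)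
  show "0 \<in> sumker T k" unfolding sumker_def
    apply (rule CollectI, rule exI[of _ "\<lambda>_. 0"])
    using R by (auto simp: kerR_def redop_def lin.zero)
next
  fix u v assume "u \<in> sumker T k" "v \<in> sumker T k"
  then obtain x y where x: "u = (\<Sum>j\<in>{1..k}. x j)" "\<forall>j\<in>{1..k}. x j \<in> kerR (T j)"
    and y: "v = (\<Sum>j\<in>{1..k}. y j)" "\<forall>j\<in>{1..k}. y j \<in> kerR (T j)"
    unfolding sumker_def by blast
  have "u + v = (\<Sum>j\<in>{1..k}. (\<lambda>j. x j + y j) j)" using x y by (simp add: sum.distrib)
  moreover have "\<forall>j\<in>{1..k}. (\<lambda>j. x j + y j) j \<in> kerR (T j)"
    using x(2) y(2) R by (auto simp: kerR_def redop_def lin.add)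
  ultimately show "u + v \<in> sumker T k" unfolding sumker_def by blast
next
  fix c u assume "u \<in> sumker T k"
  then obtain x where x: "u = (\<Sum>j\<in>{1..k}. x j)" "\<forall>j\<in>{1..k}. x j \<in> kerR (T j)"
    unfolding sumker_def by blast
  have "smul c u = (\<Sum>j\<in>{1..k}. (\<lambda>j. smul c (x j)) j)" using x by (simp add: KG.scale_sum_right)
  moreover have "\<forall>j\<in>{1..k}. (\<lambda>j. smul c (x j)) j \<in> kerR (T j)"
    using x(2) R by (auto simp: kerR_def redop_def lin.sc)
  ultimately show "smul c u \<in> sumker T k" unfolding sumker_def by blast
qed

lemma meet_fam_props: assumes R: "\<And>j. j \<in> {1..k} \<Longrightarrow> redop (T j)"
  shows "redop (meet_fam T k)" "kerR (meet_fam T k) = sumker T k"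
  using kinv_props[OF sumker_subspace[OF R]] unfolding meet_fam_def sumker_def by auto

lemma rjoin_props: assumes "redop U" "redop S"
  shows "redop (rjoin U S)" "kerR (rjoin U S) = kerR U \<inter> kerR S"
proof -
  have "KG.subspace (kerR U \<inter> kerR S)"
    using assms by (intro KG.subspace_inter lin.subsp_ker) (auto simp: redop_def)
  thus "redop (rjoin U S)" "kerR (rjoin U S) = kerR U \<inter> kerR S"
    using kinv_props unfolding rjoin_def by auto
qed


definition supp :: "('a \<Rightarrow> 'k::zero) \<Rightarrow> 'a set" where "supp c = {p. c p \<noteq> 0}"

definition bvec :: "(nat \<Rightarrow> ('g::wellorder \<Rightarrow>\<^sub>0 'k::field) \<Rightarrow> ('g \<Rightarrow>\<^sub>0 'k)) \<Rightarrow> nat \<times> 'g \<Rightarrow> ('g \<Rightarrow>\<^sub>0 'k)" where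
  "bvec T p = rdelta (snd p) - T (fst p) (rdelta (snd p))"

definition Ev :: "(nat \<Rightarrow> ('g::wellorder \<Rightarrow>\<^sub>0 'k::field) \<Rightarrow> ('g \<Rightarrow>\<^sub>0 'k)) \<Rightarrow> (nat \<times> 'g \<Rightarrow> 'k) \<Rightarrow> ('g \<Rightarrow>\<^sub>0 'k)" where
  "Ev T c = (\<Sum>p\<in>supp c. smul (c p) (bvec T p))"

definition tupl :: "(nat \<Rightarrow> ('g::wellorder \<Rightarrow>\<^sub>0 'k::field) \<Rightarrow> ('g \<Rightarrow>\<^sub>0 'k)) \<Rightarrow> (nat \<times> 'g \<Rightarrow> 'k) \<Rightarrow> (nat \<Rightarrow> ('g \<Rightarrow>\<^sub>0 'k))" where
  "tupl T c = (\<Sum>p\<in>supp c. tsmul (c p) (eF T (fst p) (snd p)))"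

definition Aset :: "(nat \<Rightarrow> ('g::wellorder \<Rightarrow>\<^sub>0 'k::field) \<Rightarrow> ('g \<Rightarrow>\<^sub>0 'k)) \<Rightarrow> nat \<Rightarrow> (nat \<times> 'g) set" where
  "Aset T k = {p. fst p \<in> {1..k} \<and> snd p \<in> red (T (fst p))}"

lemma Ev_sup: "finite S \<Longrightarrow> supp c \<subseteq> S \<Longrightarrow> Ev T c = (\<Sum>p\<in>S. smul (c p) (bvec T p))"
  unfolding Ev_def by (rule sum.mono_neutral_left) (auto simp: supp_def)

lemma tupl_sup: "finite S \<Longrightarrow> supp c \<subseteq> S \<Longrightarrow> tupl T c = (\<Sum>p\<in>S. tsmul (c p) (eF T (fst p) (snd p)))"
  unfolding tupl_def by (rule sum.mono_neutral_left) (auto simp: supp_def tsmul_def fun_eq_iff)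

lemma Ev_lin: assumes "finite (supp c1)" "finite (supp c2)"
  shows "Ev T (\<lambda>p. c1 p + a * c2 p) = Ev T c1 + smul a (Ev T c2)"
proof -
  let ?S = "supp c1 \<union> supp c2"
  have f: "finite ?S" using assms by simp
  have "Ev T (\<lambda>p. c1 p + a * c2 p) = (\<Sum>p\<in>?S. smul (c1 p + a * c2 p) (bvec T p))"
    by (rule Ev_sup[OF f]) (auto simp: supp_def)
  also have "\<dots> = (\<Sum>p\<in>?S. smul (c1 p) (bvec T p)) + smul a (\<Sum>p\<in>?S. smul (c2 p) (bvec T p))"
    by (simp add: KG.scale_left_distrib sum.distrib KG.scale_sum_right)
  also have "\<dots> = Ev T c1 + smul a (Ev T c2)"
    using Ev_sup[OF f, of c1 T] Ev_sup[OF f, of c2 T] by simp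
  finally show ?thesis .
qed

lemma Ev_zero: "Ev T (\<lambda>_. 0) = 0" by (simp add: Ev_def supp_def)
lemma tupl_zero: "tupl T (\<lambda>_. 0) = 0" by (simp add: tupl_def supp_def)

lemma eF_apply: "eF T j' g j = (if j = j' then bvec T (j', g) else 0)"
  by (simp add: eF_def bvec_def)

lemma tupl_apply: "tupl T c j = (\<Sum>p\<in>supp c. smul (c p) (if fst p = j then bvec T p else 0))"
  unfolding tupl_def sum_fun_apply by (auto simp: eF_apply intro!: sum.cong)

lemma sqless_trans: "sqless p q \<Longrightarrow> sqless q r \<Longrightarrow> sqless p r"
  by (auto simp: sqless_def)
lemma sqless_irrefl: "\<not> sqless p p" by (simp add: sqless_def)
lemma sqless_asym: "sqless p q \<Longrightarrow> \<not> sqless q p" by (auto simp: sqless_def)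
lemma sqless_total: "p \<noteq> q \<Longrightarrow> sqless p q \<or> sqless q p"
  by (cases p, cases q) (auto simp: sqless_def)

lemma sqless_wf: "wf {(p, q). sqless p q}"
proof -
  have "{(p, q). sqless p q} = less_than <*lex*> {(x, y::'a::wellorder). x < y}"
    by (auto simp: sqless_def)
  thus ?thesis using wf_lex_prod[OF wf_less_than wellorder_class.wf] by simp
qed

lemma sq_max: assumes "finite P" "P \<noteq> {}" shows "\<exists>p\<in>P. \<forall>q\<in>P. q = p \<or> sqless q p"
  using assms
proof (induct P rule: finite_ne_induct)
  case (singleton x) thus ?case by simp
next
  case (insert x F)
  then obtain p where p: "p \<in> F" "\<forall>q\<in>F. q = p \<or> sqless q p" by blast
  show ?case
  proof (cases "sqless x p")
    case True thus ?thesis using p by auto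
  next
    case False
    hence "x = p \<or> sqless p x" using sqless_total[of x p] by auto
    have "\<forall>q\<in>insert x F. q = x \<or> sqless q x"
    proof
      fix q assume q: "q \<in> insert x F"
      show "q = x \<or> sqless q x"
      proof (cases "q = x")
        case False
        hence "q \<in> F" using q by simp
        hence "q = p \<or> sqless q p" using p(2) by simp
        thus ?thesis using \<open>x = p \<or> sqless p x\<close> sqless_trans[of q p x] by auto
      qed simp
    qed
    thus ?thesis by blast
  qed
qed

locale famk =
  fixes T :: "nat \<Rightarrow> ('g::wellorder \<Rightarrow>\<^sub>0 'k::field) \<Rightarrow> ('g \<Rightarrow>\<^sub>0 'k)" and k :: nat
  assumes R: "\<And>j. j \<in> {1..k} \<Longrightarrow> redop (T j)"
begin

lemma Tzero: "j \<in> {1..k} \<Longrightarrow> T j 0 = 0" using R by (simp add: redop_def lin.zero)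

lemma bvec_ker: "p \<in> Aset T k \<Longrightarrow> bvec T p \<in> kerR (T (fst p))"
  unfolding bvec_def Aset_def using R redop.ker_basis by auto

lemma kerF_subspace: "TP.subspace (kerF T k)"
proof (rule TP.subspaceI)
  show "0 \<in> kerF T k" using R by (auto simp: kerF_def kerR_def redop_def lin.zero)
  fix x y assume "x \<in> kerF T k" "y \<in> kerF T k"
  thus "x + y \<in> kerF T k" using R by (auto simp: kerF_def kerR_def redop_def lin.add)
next
  fix c x assume "x \<in> kerF T k"
  thus "tsmul c x \<in> kerF T k" using R by (auto simp: kerF_def kerR_def redop_def lin.sc)
qed

lemma piF_add: "piF k (x + y) = piF k x + piF k y" by (simp add: piF_def sum.distrib)
lemma piF_sc: "piF k (tsmul c x) = smul c (piF k x)" by (simp add: piF_def KG.scale_sum_right)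
lemma piF_sum: "piF k (sum f A) = (\<Sum>a\<in>A. piF k (f a))"
  unfolding piF_def sum_fun_apply by (rule sum.swap)
lemma piF_diff: "piF k (x - y) = piF k x - piF k y" by (simp add: piF_def sum_subtractf)

lemma syz_subspace: "TP.subspace (syz T k)"
proof (rule TP.subspaceI)
  show "0 \<in> syz T k" using TP.subspace_0[OF kerF_subspace] by (simp add: syz_def piF_def)
  fix x y assume "x \<in> syz T k" "y \<in> syz T k"
  thus "x + y \<in> syz T k" using TP.subspace_add[OF kerF_subspace] by (simp add: syz_def piF_add)
next
  fix c x assume "x \<in> syz T k"
  thus "tsmul c x \<in> syz T k" using TP.subspace_scale[OF kerF_subspace] by (simp add: syz_def piF_sc)
qed

lemma tupl_kerF: assumes "supp c \<subseteq> Aset T k" shows "tupl T c \<in> kerF T k"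
  unfolding tupl_def
proof (rule TP.subspace_sum[OF kerF_subspace])
  fix p assume "p \<in> supp c"
  hence p: "p \<in> Aset T k" using assms by blast
  have "eF T (fst p) (snd p) \<in> kerF T k"
    using bvec_ker[OF p] p by (auto simp: kerF_def eF_apply kerR_def Aset_def Tzero)
  thus "tsmul (c p) (eF T (fst p) (snd p)) \<in> kerF T k" by (rule TP.subspace_scale[OF kerF_subspace])
qed

lemma piF_eF: "j \<in> {1..k} \<Longrightarrow> piF k (eF T j g) = bvec T (j, g)"
  unfolding piF_def eF_apply by (simp add: sum.delta')

lemma piF_tupl: assumes "supp c \<subseteq> Aset T k" shows "piF k (tupl T c) = Ev T c"
  unfolding tupl_def Ev_def piF_sum piF_sc
proof (rule sum.cong[OF refl])
  fix p assume "p \<in> supp c"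
  hence "fst p \<in> {1..k}" using assms by (auto simp: Aset_def)
  thus "smul (c p) (piF k (eF T (fst p) (snd p))) = smul (c p) (bvec T p)" by (simp add: piF_eF)
qed

lemma coefF_tupl: assumes f: "finite (supp c)" and A: "supp c \<subseteq> Aset T k"
  shows "coefF T k (tupl T c) = c"
proof
  fix p :: "nat \<times> 'g"
  obtain j g where pj: "p = (j, g)" by (cases p)
  show "coefF T k (tupl T c) p = c p"
  proof (cases "p \<in> Aset T k")
    case False
    hence c0: "c p = 0" using A by (auto simp: supp_def)
    show ?thesis
    proof (cases "j \<in> {1..k}")
      case False thus ?thesis using c0 unfolding coefF_def pj by auto
    next
      case True
      interpret redop "T j" using R True by simp
      have "tupl T c j \<in> kerR (T j)" using tupl_kerF[OF A] True by (simp add: kerF_def)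
      moreover have "g \<notin> red (T j)" using False True by (auto simp: pj Aset_def)
      ultimately have "Tdec (T j) (tupl T c j) g = 0" by (simp add: Tdec_eq)
      thus ?thesis using True c0 by (simp add: coefF_def pj)
    qed
  next
    case True
    hence j: "j \<in> {1..k}" and g: "g \<in> red (T j)" by (auto simp: Aset_def pj)
    interpret redop "T j" using R j by simp
    have ker: "tupl T c j \<in> kerR (T j)" using tupl_kerF[OF A] j by (simp add: kerF_def)
    have "lk (tupl T c j) g = (\<Sum>q\<in>supp c. c q * lk (if fst q = j then bvec T q else 0) g)"
      by (simp add: tupl_apply lookup_sum)
    also have "\<dots> = (\<Sum>q\<in>supp c. if q = p then c q else 0)"
    proof (rule sum.cong[OF refl])
      fix q :: "nat \<times> 'g"
      have "lk (T j (rdelta (snd q))) g = 0" using keys_T_red[of "rdelta (snd q)"] g by (auto simp: in_keys_iff)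
      thus "c q * lk (if fst q = j then bvec T q else 0) g = (if q = p then c q else 0)"
        by (cases q) (auto simp: bvec_def lookup_minus lookup_rdelta pj)
    qed
    also have "\<dots> = c p" using f by (simp add: supp_def)
    finally show ?thesis using ker j g by (simp add: coefF_def pj Tdec_eq)
  qed
qed

lemma coefF_kerF: assumes x: "x \<in> kerF T k"
  shows "coefF T k x = (\<lambda>p. if fst p \<in> {1..k} \<and> snd p \<in> red (T (fst p)) then lk (x (fst p)) (snd p) else 0)"
proof
  fix p
  show "coefF T k x p = (if fst p \<in> {1..k} \<and> snd p \<in> red (T (fst p)) then lk (x (fst p)) (snd p) else 0)"
  proof (cases "fst p \<in> {1..k}")
    case True
    interpret redop "T (fst p)" using R True by simp
    have "x (fst p) \<in> kerR (T (fst p))" using x True by (simp add: kerF_def)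
    thus ?thesis using True by (simp add: coefF_def Tdec_eq)
  qed (auto simp: coefF_def)
qed

lemma coefF_supp: assumes x: "x \<in> kerF T k"
  shows "supp (coefF T k x) = Sigma {1..k} (\<lambda>j. pk (x j) \<inter> red (T j))"
  using coefF_kerF[OF x] by (auto simp: supp_def in_keys_iff)

lemma coefF_fin: "x \<in> kerF T k \<Longrightarrow> finite (supp (coefF T k x))"
  by (simp add: coefF_supp)

lemma coefF_A: "x \<in> kerF T k \<Longrightarrow> supp (coefF T k x) \<subseteq> Aset T k"
  by (auto simp: coefF_supp Aset_def)

lemma tupl_coefF: assumes x: "x \<in> kerF T k" shows "tupl T (coefF T k x) = x"
proof
  fix j
  let ?S = "Sigma {1..k} (\<lambda>j. pk (x j) \<inter> red (T j))"
  have "tupl T (coefF T k x) j = (\<Sum>p\<in>?S. smul (coefF T k x p) (if fst p = j then bvec T p else 0))"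
    unfolding tupl_apply coefF_supp[OF x] ..
  also have "\<dots> = (\<Sum>j'\<in>{1..k}. \<Sum>g\<in>pk (x j') \<inter> red (T j'). smul (coefF T k x (j', g)) (if j' = j then bvec T (j', g) else 0))"
    apply (subst sum.Sigma)
      apply simp
     apply simp
    apply (rule sum.cong[OF refl])
    by (auto simp: split_beta)
  also have "\<dots> = (\<Sum>j'\<in>{1..k}. if j' = j then (\<Sum>g\<in>pk (x j) \<inter> red (T j). smul (coefF T k x (j, g)) (bvec T (j, g))) else 0)"
    by (rule sum.cong[OF refl]) auto
  also have "\<dots> = (if j \<in> {1..k} then (\<Sum>g\<in>pk (x j) \<inter> red (T j). smul (coefF T k x (j, g)) (bvec T (j, g))) else 0)"
    by (simp add: sum.delta')
  also have "\<dots> = x j"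
  proof (cases "j \<in> {1..k}")
    case True
    interpret redop "T j" using R True by simp
    have xj: "x j \<in> kerR (T j)" using x True by (simp add: kerF_def)
    have "(\<Sum>g\<in>pk (x j) \<inter> red (T j). smul (coefF T k x (j, g)) (bvec T (j, g))) =
      (\<Sum>g\<in>pk (x j) \<inter> red (T j). smul (lk (x j) g) (rdelta g - T j (rdelta g)))"
      using True by (intro sum.cong[OF refl]) (simp add: coefF_kerF[OF x] bvec_def)
    also have "\<dots> = x j" using ker_dec[OF xj] by simp
    finally show ?thesis using True by simp
  next
    case False thus ?thesis using x by (auto simp: kerF_def)
  qed
  finally show "tupl T (coefF T k x) j = x j" .
qed

lemma piF_coefF: "x \<in> kerF T k \<Longrightarrow> piF k x = Ev T (coefF T k x)"
  using piF_tupl[OF coefF_A] tupl_coefF by metis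

lemma ltF_char: assumes x: "x \<in> kerF T k" "x \<noteq> 0"
  shows "coefF T k x (ltF T k x) \<noteq> 0" "\<forall>q. coefF T k x q \<noteq> 0 \<longrightarrow> q = ltF T k x \<or> sqless q (ltF T k x)"
proof -
  let ?P = "supp (coefF T k x)"
  have ne: "?P \<noteq> {}"
  proof
    assume "?P = {}"
    hence "coefF T k x = (\<lambda>_. 0)" by (auto simp: supp_def)
    hence "tupl T (coefF T k x) = 0" unfolding tupl_def by simp
    thus False using x(2) tupl_coefF[OF x(1)] by simp
  qed
  obtain p where p: "p \<in> ?P" "\<forall>q\<in>?P. q = p \<or> sqless q p" using sq_max[OF coefF_fin[OF x(1)] ne] by blast
  have "ltF T k x = p" unfolding ltF_def
  proof (rule the_equality)
    show "coefF T k x p \<noteq> 0 \<and> (\<forall>q. coefF T k x q \<noteq> 0 \<longrightarrow> q = p \<or> sqless q p)" using p by (auto simp: supp_def)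
  next
    fix p' assume p': "coefF T k x p' \<noteq> 0 \<and> (\<forall>q. coefF T k x q \<noteq> 0 \<longrightarrow> q = p' \<or> sqless q p')"
    have "p = p' \<or> sqless p p'" using p' p(1) unfolding supp_def by blast
    moreover have "p' = p \<or> sqless p' p" using p' p(2) unfolding supp_def by blast
    ultimately show "p' = p" using sqless_asym by blast
  qed
  thus "coefF T k x (ltF T k x) \<noteq> 0" "\<forall>q. coefF T k x q \<noteq> 0 \<longrightarrow> q = ltF T k x \<or> sqless q (ltF T k x)"
    using p by (auto simp: supp_def)
qed

end


lemma supp_lin: "supp (\<lambda>p. c1 p + a * c2 p) \<subseteq> supp c1 \<union> supp (c2 :: _ \<Rightarrow> 'k::field)"
  by (auto simp: supp_def)

definition dlt :: "'a \<Rightarrow> 'a \<Rightarrow> 'k::field" where "dlt q p = (if p = q then 1 else 0)"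

lemma supp_dlt: "supp (dlt q :: _ \<Rightarrow> 'k::field) = {q}" by (auto simp: supp_def dlt_def)

lemma Ev_dlt: "Ev T (dlt q) = bvec T q"
  by (simp add: Ev_def supp_dlt dlt_def)

context famk begin

lemma coefF_zero: "coefF T k 0 = (\<lambda>_. 0)"
  using coefF_kerF[OF TP.subspace_0[OF kerF_subspace]] by (simp add: fun_eq_iff)

lemma reduce:
  assumes "finite (supp d)" "supp d \<subseteq> Aset T k"
  shows "\<exists>c. finite (supp c) \<and> supp c \<subseteq> Aset T k - ltsyz T k \<and> Ev T c = Ev T d"
proof -
  define good where "good d \<longleftrightarrow> (\<exists>c. finite (supp c) \<and> supp c \<subseteq> Aset T k - ltsyz T k \<and> Ev T c = Ev T d)" for d
  define adm where "adm d \<longleftrightarrow> finite (supp d) \<and> supp d \<subseteq> Aset T k" for d :: "nat \<times> 'g \<Rightarrow> 'k"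
  have good0: "good d" if "supp d = {}" for d
  proof -
    have "Ev T d = 0" using that by (simp add: Ev_def)
    thus ?thesis unfolding good_def using Ev_zero[of T] by (intro exI[of _ "\<lambda>_. 0"]) (simp add: supp_def)
  qed
  have main: "\<forall>d. adm d \<and> (\<forall>p\<in>supp d. p = q \<or> sqless p q) \<longrightarrow> good d" for q
  proof (induct q rule: wf_induct[OF sqless_wf])
    case (1 q)
    have aux: "good d'" if ad: "adm d'" and bd: "\<forall>p\<in>supp d'. sqless p q" for d'
    proof (cases "supp d' = {}")
      case True thus ?thesis by (rule good0)
    next
      case False
      obtain q' where q': "q' \<in> supp d'" "\<forall>p\<in>supp d'. p = q' \<or> sqless p q'"
        using sq_max[OF _ False] ad by (auto simp: adm_def)
      have "sqless q' q" using bd q'(1) by blast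
      hence "\<forall>d. adm d \<and> (\<forall>p\<in>supp d. p = q' \<or> sqless p q') \<longrightarrow> good d" using 1 by blast
      thus ?thesis using ad q'(2) by blast
    qed
    show ?case
    proof (intro allI impI)
      fix d assume hd: "adm d \<and> (\<forall>p\<in>supp d. p = q \<or> sqless p q)"
      define d' where "d' = d(q := 0)"
      have sd': "supp d' \<subseteq> supp d" by (auto simp: supp_def d'_def)
      have ad': "adm d'" using hd sd' by (auto simp: adm_def intro: finite_subset)
      have bd': "\<forall>p\<in>supp d'. sqless p q"
      proof
        fix p assume p: "p \<in> supp d'"
        hence "p \<noteq> q" by (auto simp: supp_def d'_def)
        moreover have "p = q \<or> sqless p q" using hd p sd' by blast
        ultimately show "sqless p q" by simp
      qed
      have gd': "good d'" by (rule aux[OF ad' bd'])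
      have dd: "d = (\<lambda>p. d' p + d q * dlt q p)" by (auto simp: fun_eq_iff d'_def dlt_def)
      have fd': "finite (supp d')" using ad' by (simp add: adm_def)
      have Ed: "Ev T d = Ev T d' + smul (d q) (bvec T q)"
        by (subst dd, subst Ev_lin[OF fd']) (simp_all add: supp_dlt Ev_dlt)
      show "good d"
      proof (cases "d q = 0")
        case True
        hence "d = d'" by (auto simp: fun_eq_iff d'_def)
        thus ?thesis using gd' by simp
      next
        case dq: False
        hence qA: "q \<in> Aset T k" using hd by (auto simp: adm_def supp_def)
        show ?thesis
        proof (cases "q \<in> ltsyz T k")
          case False
          obtain c' where c': "finite (supp c')" "supp c' \<subseteq> Aset T k - ltsyz T k" "Ev T c' = Ev T d'"
            using gd' by (auto simp: good_def)
          define c where "c = (\<lambda>p. c' p + d q * dlt q p)"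
          have "supp c \<subseteq> supp c' \<union> {q}" using supp_lin[of c' "d q" "dlt q"] by (simp add: c_def supp_dlt)
          hence sc: "supp c \<subseteq> Aset T k - ltsyz T k" using c'(2) qA False by blast
          have fc: "finite (supp c)" by (rule finite_subset[OF \<open>supp c \<subseteq> supp c' \<union> {q}\<close>]) (simp add: c'(1))
          have "Ev T c = Ev T c' + smul (d q) (bvec T q)"
            unfolding c_def by (subst Ev_lin[OF c'(1)]) (simp_all add: supp_dlt Ev_dlt)
          thus ?thesis unfolding good_def using sc fc c'(3) Ed by auto
        next
          case True
          then obtain x where x: "x \<in> syz T k" "x \<noteq> 0" "ltF T k x = q" by (auto simp: ltsyz_def)
          have xk: "x \<in> kerF T k" using x(1) by (simp add: syz_def)
          define s where "s = coefF T k x"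
          have sq: "s q \<noteq> 0" using ltF_char(1)[OF xk x(2)] x(3) by (simp add: s_def)
          have sb: "\<forall>p\<in>supp s. p = q \<or> sqless p q" using ltF_char(2)[OF xk x(2)] x(3) by (auto simp: s_def supp_def)
          have fs: "finite (supp s)" and As: "supp s \<subseteq> Aset T k" using coefF_fin[OF xk] coefF_A[OF xk] by (simp_all add: s_def)
          have Es: "Ev T s = 0" using piF_coefF[OF xk] x(1) by (simp add: s_def syz_def)
          define d'' where "d'' = (\<lambda>p. d p + (- (d q / s q)) * s p)"
          have sd'': "supp d'' \<subseteq> supp d \<union> supp s" unfolding d''_def by (rule supp_lin)
          have fd: "finite (supp d)" using hd by (simp add: adm_def)
          have ad'': "adm d''" unfolding adm_def using sd'' fd fs hd As
            by (auto simp: adm_def intro: finite_subset)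
          have d''q: "d'' q = 0" using sq by (simp add: d''_def)
          have bd'': "\<forall>p\<in>supp d''. sqless p q"
          proof
            fix p assume p: "p \<in> supp d''"
            hence "p \<noteq> q" using d''q by (auto simp: supp_def)
            moreover have "p \<in> supp d \<union> supp s" using p sd'' by blast
            hence "p = q \<or> sqless p q" using hd sb by blast
            ultimately show "sqless p q" by simp
          qed
          have "Ev T d'' = Ev T d + smul (- (d q / s q)) (Ev T s)" unfolding d''_def by (rule Ev_lin[OF fd fs])
          hence "Ev T d'' = Ev T d" using Es by simp
          thus ?thesis using aux[OF ad'' bd''] by (simp add: good_def)
        qed
      qed
    qed
  qed
  show ?thesis
  proof (cases "supp d = {}")
    case True thus ?thesis using good0 by (simp add: good_def)
  next
    case False
    obtain q where q: "q \<in> supp d" "\<forall>p\<in>supp d. p = q \<or> sqless p q" using sq_max[OF assms(1) False] by blast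
    have "adm d" using assms by (simp add: adm_def)
    thus ?thesis using main[of q] q(2) by (simp add: good_def)
  qed
qed

lemma cd_unique:
  assumes "finite (supp c1)" "supp c1 \<subseteq> Aset T k - ltsyz T k"
    and "finite (supp c2)" "supp c2 \<subseteq> Aset T k - ltsyz T k" and "Ev T c1 = Ev T c2"
  shows "c1 = c2"
proof -
  define d where "d = (\<lambda>p. c1 p + (-1) * c2 p)"
  have sd: "supp d \<subseteq> supp c1 \<union> supp c2" unfolding d_def by (rule supp_lin)
  have fd: "finite (supp d)" using sd assms(1,3) by (meson finite_UnI finite_subset)
  have Ad: "supp d \<subseteq> Aset T k - ltsyz T k" using sd assms(2,4) by blast
  have "Ev T d = Ev T c1 + smul (-1) (Ev T c2)" unfolding d_def by (rule Ev_lin[OF assms(1,3)])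
  hence Ed: "Ev T d = 0" using assms(5) by simp
  define x where "x = tupl T d"
  have xk: "x \<in> kerF T k" unfolding x_def by (rule tupl_kerF) (use Ad in blast)
  have "supp d \<subseteq> Aset T k" using Ad by blast
  hence "piF k x = 0" unfolding x_def using piF_tupl[of d] Ed by simp
  hence xs: "x \<in> syz T k" using xk by (simp add: syz_def)
  have cx: "coefF T k x = d" unfolding x_def by (rule coefF_tupl[OF fd]) (use Ad in blast)
  have "d = (\<lambda>_. 0)"
  proof (rule ccontr)
    assume "d \<noteq> (\<lambda>_. 0)"
    hence "x \<noteq> 0" using cx coefF_zero by auto
    hence "ltF T k x \<in> ltsyz T k" using xs by (auto simp: ltsyz_def)
    moreover have "d (ltF T k x) \<noteq> 0" using ltF_char(1)[OF xk \<open>x \<noteq> 0\<close>] cx by simp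
    ultimately show False using Ad by (auto simp: supp_def)
  qed
  thus ?thesis by (auto simp: fun_eq_iff d_def)
qed

lemma candec_spec: assumes v: "v \<in> sumker T k"
  shows "finite (supp (candec T k v))" "supp (candec T k v) \<subseteq> Aset T k - ltsyz T k" "Ev T (candec T k v) = v"
proof -
  obtain x where x: "v = (\<Sum>j\<in>{1..k}. x j)" "\<forall>j\<in>{1..k}. x j \<in> kerR (T j)"
    using v by (auto simp: sumker_def)
  define x' where "x' = (\<lambda>j. if j \<in> {1..k} then x j else 0)"
  have xk: "x' \<in> kerF T k" using x(2) by (auto simp: kerF_def x'_def)
  have px: "piF k x' = v" using x(1) by (simp add: piF_def x'_def)
  obtain c where c: "finite (supp c)" "supp c \<subseteq> Aset T k - ltsyz T k" "Ev T c = Ev T (coefF T k x')"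
    using reduce[OF coefF_fin[OF xk] coefF_A[OF xk]] by blast
  have cv: "Ev T c = v" using c(3) piF_coefF[OF xk] px by simp
  let ?P = "\<lambda>c. finite {p. c p \<noteq> 0} \<and>
      (\<forall>p. c p \<noteq> 0 \<longrightarrow> fst p \<in> {1..k} \<and> snd p \<in> red (T (fst p)) \<and> p \<notin> ltsyz T k) \<and>
      v = (\<Sum>p\<in>{p. c p \<noteq> 0}. smul (c p) (rdelta (snd p) - T (fst p) (rdelta (snd p))))"
  have Piff: "?P c' \<longleftrightarrow> finite (supp c') \<and> supp c' \<subseteq> Aset T k - ltsyz T k \<and> Ev T c' = v" for c'
    unfolding supp_def Ev_def bvec_def Aset_def by auto
  have "candec T k v = c" unfolding candec_def
  proof (rule the_equality)
    show "?P c" using Piff c cv by blast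
  next
    fix c' assume "?P c'"
    hence "finite (supp c')" "supp c' \<subseteq> Aset T k - ltsyz T k" "Ev T c' = v" using Piff by blast+
    thus "c' = c" using cd_unique[of c' c] c cv by simp
  qed
  thus "finite (supp (candec T k v))" "supp (candec T k v) \<subseteq> Aset T k - ltsyz T k" "Ev T (candec T k v) = v"
    using c cv by simp_all
qed

end


lemma famkI: "(\<And>j. j \<in> {1..k} \<Longrightarrow> redop (T j)) \<Longrightarrow> famk T k"
  by (simp add: famk_def)

lemma svec_facts:
  fixes T :: "nat \<Rightarrow> ('g::wellorder \<Rightarrow>\<^sub>0 'k::field) \<Rightarrow> ('g \<Rightarrow>\<^sub>0 'k)"
  assumes i: "2 \<le> i" and R: "\<And>j. j \<in> {1..i} \<Longrightarrow> redop (T j)"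
    and gg: "gg \<in> red (rjoin (meet_fam T (i - 1)) (T i))"
  shows "svec T i gg i = vvec T i gg"
    "\<And>j. i < j \<Longrightarrow> svec T i gg j = 0"
    "svec T i gg 0 = 0"
    "\<And>j. j \<in> {1..i} \<Longrightarrow> svec T i gg j \<in> kerR (T j)"
    "(\<Sum>j\<in>{1..i}. svec T i gg j) = 0"
    "lk (vvec T i gg) gg = 1" "\<And>x. x \<in> pk (vvec T i gg) \<Longrightarrow> x \<le> gg"
proof -
  have R': "\<And>j. j \<in> {1..i-1} \<Longrightarrow> redop (T j)" using R by auto
  interpret F: famk T "i - 1" by (rule famkI[OF R'])
  have Ti: "redop (T i)" using R i by auto
  note U = meet_fam_props[OF R']
  define Rj where "Rj = rjoin (meet_fam T (i - 1)) (T i)"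
  note RR = rjoin_props[OF U(1) Ti]
  interpret RJ: redop Rj using RR(1) by (simp add: Rj_def)
  define v where "v = vvec T i gg"
  have v_eq: "v = rdelta gg - Rj (rdelta gg)" by (simp add: v_def vvec_def Rj_def)
  have gg': "gg \<in> red Rj" using gg by (simp add: Rj_def)
  have vker: "v \<in> kerR Rj" unfolding v_eq by (rule RJ.ker_basis)
  hence vU: "v \<in> sumker T (i - 1)" and vT: "v \<in> kerR (T i)" using RR(2) U(2) by (auto simp: Rj_def)
  have "lk (Rj (rdelta gg)) gg = 0" using RJ.red_lt[OF gg', of gg] by (auto simp: in_keys_iff)
  thus "lk (vvec T i gg) gg = 1" by (simp add: v_def[symmetric] v_eq lookup_minus lookup_rdelta)
  show "x \<le> gg" if "x \<in> pk (vvec T i gg)" for x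
  proof -
    have "x \<in> pk (rdelta gg - Rj (rdelta gg))" using that by (simp add: v_def[symmetric] v_eq)
    hence "x = gg \<or> x \<in> pk (Rj (rdelta gg))" using keys_diff[of "rdelta gg" "Rj (rdelta gg)"] by auto
    thus ?thesis using RJ.keys_T_le by auto
  qed
  define c where "c = candec T (i - 1) v"
  note cs = F.candec_spec[OF vU, folded c_def]
  interpret TI: redop "T i" by (rule Ti)
  define S1 where "S1 = (\<Sum>g\<in>{g. Tdec (T i) v g \<noteq> 0}. tsmul (Tdec (T i) v g) (eF T i g))"
  have sv: "svec T i gg = S1 - tupl T c"
    unfolding svec_def Let_def v_def[symmetric] c_def[symmetric] S1_def tupl_def supp_def by (rule refl)
  have S1j: "S1 j = (if j = i then v else 0)" for j
  proof -
    have e: "{g. Tdec (T i) v g \<noteq> 0} = pk v \<inter> red (T i)"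
      using TI.Tdec_eq[OF vT] by (auto simp: in_keys_iff)
    have "S1 j = (\<Sum>g\<in>pk v \<inter> red (T i). smul (lk v g) (if j = i then bvec T (i, g) else 0))"
      unfolding S1_def sum_fun_apply e using TI.Tdec_eq[OF vT] by (auto simp: eF_apply intro!: sum.cong)
    also have "\<dots> = (if j = i then v else 0)"
      using TI.ker_dec[OF vT] by (auto simp: bvec_def)
    finally show ?thesis .
  qed
  have tk: "tupl T c \<in> kerF T (i - 1)" using F.tupl_kerF cs(2) by blast
  have tz: "tupl T c j = 0" if "j \<notin> {1..i-1}" for j using tk that by (simp add: kerF_def)
  show "svec T i gg i = vvec T i gg" using tz[of i] i by (simp add: sv S1j v_def)
  show "svec T i gg j = 0" if "i < j" for j using tz[of j] that by (simp add: sv S1j)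
  show "svec T i gg 0 = 0" using tz[of 0] i by (simp add: sv S1j)
  show "svec T i gg j \<in> kerR (T j)" if j: "j \<in> {1..i}" for j
  proof (cases "j = i")
    case True thus ?thesis using tz[of i] vT i by (simp add: sv S1j)
  next
    case False
    hence j': "j \<in> {1..i-1}" using j by auto
    interpret TJ: redop "T j" using R j by simp
    have "tupl T c j \<in> kerR (T j)" using tk j' by (simp add: kerF_def)
    hence "- tupl T c j \<in> kerR (T j)" by (simp add: kerR_def TJ.minus)
    thus ?thesis using False by (simp add: sv S1j)
  qed
  have "(\<Sum>j\<in>{1..i}. svec T i gg j) = (\<Sum>j\<in>{1..i}. S1 j) - (\<Sum>j\<in>{1..i}. tupl T c j)"
    by (simp add: sv sum_subtractf)
  also have "(\<Sum>j\<in>{1..i}. S1 j) = v" using i by (simp add: S1j sum.delta')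
  also have "(\<Sum>j\<in>{1..i}. tupl T c j) = (\<Sum>j\<in>{1..i-1}. tupl T c j)"
    by (rule sum.mono_neutral_right) (auto simp: tz)
  also have "\<dots> = piF (i - 1) (tupl T c)" by (simp add: piF_def)
  also have "\<dots> = v" using F.piF_tupl cs by auto
  finally show "(\<Sum>j\<in>{1..i}. svec T i gg j) = 0" by simp
qed


lemma Bset_char: "b \<in> Bset T n \<longleftrightarrow>
  (\<exists>i g0. 2 \<le> i \<and> i \<le> n \<and> g0 \<in> red (rjoin (meet_fam T (i - 1)) (T i)) \<and> b = svec T i g0)"
proof (induct n)
  case 0 thus ?case by simp
next
  case (Suc m)
  show ?case
  proof (cases "m = 0")
    case True thus ?thesis by auto
  next
    case False
    hence B: "Bset T (Suc m) = Bset T m \<union> {svec T (Suc m) g0 | g0. g0 \<in> red (rjoin (meet_fam T m) (T (Suc m)))}"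
      by simp
    show ?thesis
    proof
      assume "b \<in> Bset T (Suc m)"
      hence "b \<in> Bset T m \<or> (\<exists>g0. g0 \<in> red (rjoin (meet_fam T m) (T (Suc m))) \<and> b = svec T (Suc m) g0)"
        unfolding B by blast
      thus "\<exists>i g0. 2 \<le> i \<and> i \<le> Suc m \<and> g0 \<in> red (rjoin (meet_fam T (i - 1)) (T i)) \<and> b = svec T i g0"
      proof
        assume "b \<in> Bset T m"
        then obtain i g0 where "2 \<le> i \<and> i \<le> m \<and> g0 \<in> red (rjoin (meet_fam T (i - 1)) (T i)) \<and> b = svec T i g0"
          using Suc.hyps by blast
        thus ?thesis by (intro exI[of _ i] exI[of _ g0]) simp
      next
        assume "\<exists>g0. g0 \<in> red (rjoin (meet_fam T m) (T (Suc m))) \<and> b = svec T (Suc m) g0"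
        then obtain g0 where "g0 \<in> red (rjoin (meet_fam T m) (T (Suc m)))" "b = svec T (Suc m) g0" by blast
        thus ?thesis using False by (intro exI[of _ "Suc m"] exI[of _ g0]) simp
      qed
    next
      assume "\<exists>i g0. 2 \<le> i \<and> i \<le> Suc m \<and> g0 \<in> red (rjoin (meet_fam T (i - 1)) (T i)) \<and> b = svec T i g0"
      then obtain i g0 where ig: "2 \<le> i" "i \<le> Suc m" "g0 \<in> red (rjoin (meet_fam T (i - 1)) (T i))" "b = svec T i g0"
        by blast
      show "b \<in> Bset T (Suc m)"
      proof (cases "i = Suc m")
        case True
        hence "b \<in> {svec T (Suc m) g0 | g0. g0 \<in> red (rjoin (meet_fam T m) (T (Suc m)))}" using ig by auto
        thus ?thesis unfolding B by blast
      next
        case False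
        hence "i \<le> m" using ig(2) by simp
        hence "b \<in> Bset T m" using Suc.hyps ig by blast
        thus ?thesis unfolding B by blast
      qed
    qed
  qed
qed

lemma svec_syz:
  fixes T :: "nat \<Rightarrow> ('g::wellorder \<Rightarrow>\<^sub>0 'k::field) \<Rightarrow> ('g \<Rightarrow>\<^sub>0 'k)"
  assumes i: "2 \<le> i" "i \<le> m" and R: "\<And>j. j \<in> {1..m} \<Longrightarrow> redop (T j)"
    and g0: "g0 \<in> red (rjoin (meet_fam T (i - 1)) (T i))"
  shows "svec T i g0 \<in> syz T m"
proof -
  have R': "\<And>j. j \<in> {1..i} \<Longrightarrow> redop (T j)" using R i by auto
  note sf = svec_facts[OF i(1) R' g0]
  have kf: "svec T i g0 \<in> kerF T m"
    unfolding kerF_def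
  proof (intro CollectI conjI ballI allI impI)
    fix j assume j: "j \<in> {1..m}"
    show "svec T i g0 j \<in> kerR (T j)"
    proof (cases "j \<le> i")
      case True thus ?thesis using sf(4)[of j] j by auto
    next
      case False
      interpret redop "T j" using R j by simp
      show ?thesis using sf(2)[of j] False by (simp add: kerR_def)
    qed
  next
    fix j assume j: "j \<notin> {1..m}"
    show "svec T i g0 j = 0"
    proof (cases "j = 0")
      case True thus ?thesis using sf(3) by simp
    next
      case False thus ?thesis using j i sf(2)[of j] by auto
    qed
  qed
  have "piF m (svec T i g0) = (\<Sum>j\<in>{1..i}. svec T i g0 j)"
    unfolding piF_def using i sf(2) by (intro sum.mono_neutral_right) auto
  thus ?thesis using kf sf(5) by (simp add: syz_def)
qed

lemma Bset_syz:
  fixes T :: "nat \<Rightarrow> ('g::wellorder \<Rightarrow>\<^sub>0 'k::field) \<Rightarrow> ('g \<Rightarrow>\<^sub>0 'k)"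
  assumes R: "\<And>j. j \<in> {1..n} \<Longrightarrow> redop (T j)"
  shows "Bset T n \<subseteq> syz T n"
proof
  fix b assume "b \<in> Bset T n"
  then obtain i g0 where "2 \<le> i" "i \<le> n" "g0 \<in> red (rjoin (meet_fam T (i - 1)) (T i))" "b = svec T i g0"
    by (auto simp: Bset_char)
  thus "b \<in> syz T n" using svec_syz[of i n T g0] R by simp
qed

lemma span_syz:
  fixes T :: "nat \<Rightarrow> ('g::wellorder \<Rightarrow>\<^sub>0 'k::field) \<Rightarrow> ('g \<Rightarrow>\<^sub>0 'k)"
  shows "1 \<le> n \<Longrightarrow> (\<And>j. j \<in> {1..n} \<Longrightarrow> redop (T j)) \<Longrightarrow> syz T n \<subseteq> TP.span (Bset T n)"
proof (induct n)
  case 0 thus ?case by simp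
next
  case (Suc m)
  note R = Suc.prems(2)
  interpret F: famk T "Suc m" using R by (rule famkI)
  show ?case
  proof
    fix x assume xs: "x \<in> syz T (Suc m)"
    hence xk: "x \<in> kerF T (Suc m)" and px: "piF (Suc m) x = 0" by (auto simp: syz_def)
    show "x \<in> TP.span (Bset T (Suc m))"
    proof (cases "m = 0")
      case True
      have "x = 0"
      proof
        fix j show "x j = 0 j"
        proof (cases "j = 1")
          case True thus ?thesis using px \<open>m = 0\<close> by (simp add: piF_def)
        next
          case False thus ?thesis using xk \<open>m = 0\<close> by (auto simp: kerF_def)
        qed
      qed
      thus ?thesis by (simp add: TP.span_zero)
    next
      case False
      hence m1: "1 \<le> m" by simp
      have R': "\<And>j. j \<in> {1..m} \<Longrightarrow> redop (T j)" using R by auto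
      note U = meet_fam_props[OF R']
      have TS: "redop (T (Suc m))" using R by simp
      define Rj where "Rj = rjoin (meet_fam T m) (T (Suc m))"
      note RR = rjoin_props[OF U(1) TS]
      interpret RJ: redop Rj using RR(1) by (simp add: Rj_def)
      interpret TSm: redop "T (Suc m)" by (rule TS)
      define w where "w = - x (Suc m)"
      have sumx: "(\<Sum>j\<in>{1..m}. x j) = w"
        using px by (simp add: piF_def w_def eq_neg_iff_add_eq_0)
      have wU: "w \<in> sumker T m" unfolding sumker_def using xk sumx[symmetric] by (auto simp: kerF_def)
      have wT: "w \<in> kerR (T (Suc m))" using xk by (simp add: kerF_def kerR_def w_def TSm.minus)
      have wR: "w \<in> kerR Rj" using wU wT RR(2) U(2) by (simp add: Rj_def)
      define G where "G = pk w \<inter> red Rj"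
      have vv: "vvec T (Suc m) g = rdelta g - Rj (rdelta g)" for g by (simp add: vvec_def Rj_def)
      have wdec: "w = (\<Sum>g\<in>G. smul (lk w g) (vvec T (Suc m) g))"
        using RJ.ker_dec[OF wR] by (simp add: G_def vv)
      have gG: "g \<in> red (rjoin (meet_fam T (Suc m - 1)) (T (Suc m)))" if "g \<in> G" for g
        using that by (simp add: G_def Rj_def)
      have i2: "2 \<le> Suc m" using m1 by simp
      define z where "z = (\<Sum>g\<in>G. tsmul (lk w g) (svec T (Suc m) g))"
      have zS: "z (Suc m) = w"
      proof -
        have "z (Suc m) = (\<Sum>g\<in>G. smul (lk w g) (svec T (Suc m) g (Suc m)))" by (simp add: z_def sum_fun_apply)
        also have "\<dots> = (\<Sum>g\<in>G. smul (lk w g) (vvec T (Suc m) g))"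
          using svec_facts(1)[OF i2 R gG] by simp
        finally show ?thesis using wdec by simp
      qed
      have inB: "svec T (Suc m) g \<in> Bset T (Suc m)" if "g \<in> G" for g
        using gG[OF that] i2 by (auto simp: Bset_char)
      have zspan: "z \<in> TP.span (Bset T (Suc m))" unfolding z_def
        by (intro TP.span_sum TP.span_scale TP.span_base inB)
      have zsyz: "z \<in> syz T (Suc m)" unfolding z_def
        by (intro TP.subspace_sum[OF F.syz_subspace] TP.subspace_scale[OF F.syz_subspace] svec_syz[OF i2 _ R gG]) simp
      define y where "y = x + z"
      have ys: "y \<in> syz T (Suc m)" unfolding y_def by (rule TP.subspace_add[OF F.syz_subspace xs zsyz])
      have yS: "y (Suc m) = 0" using zS by (simp add: y_def w_def)
      have ym: "y \<in> syz T m"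
      proof -
        have yk: "y \<in> kerF T (Suc m)" and py: "piF (Suc m) y = 0" using ys by (auto simp: syz_def)
        have "y \<in> kerF T m" using yk yS unfolding kerF_def
          by (auto simp: le_Suc_eq)
        moreover have "piF m y = 0" using py yS by (simp add: piF_def)
        ultimately show ?thesis by (simp add: syz_def)
      qed
      have "Bset T m \<subseteq> Bset T (Suc m)" using False by auto
      hence "y \<in> TP.span (Bset T (Suc m))" using Suc.hyps[OF m1 R'] ym TP.span_mono by blast
      have xeq: "x = y - z" by (simp add: y_def)
      show ?thesis unfolding xeq by (rule TP.span_diff[OF \<open>y \<in> TP.span (Bset T (Suc m))\<close> zspan])
    qed
  qed
qed


lemma Bset_indep:
  fixes T :: "nat \<Rightarrow> ('g::wellorder \<Rightarrow>\<^sub>0 'k::field) \<Rightarrow> ('g \<Rightarrow>\<^sub>0 'k)"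
  assumes R: "\<And>j. j \<in> {1..n} \<Longrightarrow> redop (T j)"
  shows "TP.independent (Bset T n)"
  unfolding TP.independent_explicit_module
proof (intro allI impI)
  fix t u v0 assume ft: "finite t" and tB: "t \<subseteq> Bset T n"
    and s0: "(\<Sum>v\<in>t. tsmul (u v) v) = 0" and v0: "v0 \<in> t"
  define P where "P b p \<longleftrightarrow> 2 \<le> fst p \<and> fst p \<le> n \<and> snd p \<in> red (rjoin (meet_fam T (fst p - 1)) (T (fst p))) \<and> b = svec T (fst p) (snd p)" for b p
  define key where "key b = (SOME p. P b p)" for b
  have keyP: "P b (key b)" if bB: "b \<in> Bset T n" for b
  proof -
    obtain i g0 where "2 \<le> i \<and> i \<le> n \<and> g0 \<in> red (rjoin (meet_fam T (i - 1)) (T i)) \<and> b = svec T i g0"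
      using bB unfolding Bset_char by blast
    hence "P b (i, g0)" by (simp add: P_def)
    thus ?thesis unfolding key_def by (rule someI)
  qed
  have facts: "svec T (fst (key b)) (snd (key b)) (fst (key b)) = vvec T (fst (key b)) (snd (key b))"
    "\<And>j. fst (key b) < j \<Longrightarrow> b j = 0"
    "lk (vvec T (fst (key b)) (snd (key b))) (snd (key b)) = 1"
    "\<And>x. x \<in> pk (vvec T (fst (key b)) (snd (key b))) \<Longrightarrow> x \<le> snd (key b)"
    "b = svec T (fst (key b)) (snd (key b))"
    if "b \<in> Bset T n" for b
  proof -
    have kp: "P b (key b)" using keyP[OF that] .
    hence i2: "2 \<le> fst (key b)" and g: "snd (key b) \<in> red (rjoin (meet_fam T (fst (key b) - 1)) (T (fst (key b))))"
      and bs: "b = svec T (fst (key b)) (snd (key b))" and "fst (key b) \<le> n" by (auto simp: P_def)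
    define ii where "ii = fst (key b)"
    define gi where "gi = snd (key b)"
    have i2': "2 \<le> ii" and g': "gi \<in> red (rjoin (meet_fam T (ii - 1)) (T ii))" using i2 g by (simp_all add: ii_def gi_def)
    have R': "\<And>j. j \<in> {1..ii} \<Longrightarrow> redop (T j)" using R \<open>fst (key b) \<le> n\<close> by (auto simp: ii_def)
    have sf1: "svec T ii gi ii = vvec T ii gi" by (rule svec_facts(1)[OF i2' _ g']) (rule R')
    have sf2: "svec T ii gi j = 0" if "ii < j" for j by (rule svec_facts(2)[OF i2' _ g' that]) (rule R')
    have sf6: "lk (vvec T ii gi) gi = 1" by (rule svec_facts(6)[OF i2' _ g']) (rule R')
    have sf7: "x \<le> gi" if "x \<in> pk (vvec T ii gi)" for x by (rule svec_facts(7)[OF i2' _ g' that]) (rule R')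
    note sf = sf1 sf2 sf2 sf2 sf2 sf6 sf7
    note sf = sf[unfolded ii_def gi_def]
    show "svec T (fst (key b)) (snd (key b)) (fst (key b)) = vvec T (fst (key b)) (snd (key b))" by (rule sf(1))
    show "b j = 0" if "fst (key b) < j" for j using sf(2)[OF that] bs by simp
    show "lk (vvec T (fst (key b)) (snd (key b))) (snd (key b)) = 1" by (rule sf(6))
    show "x \<le> snd (key b)" if "x \<in> pk (vvec T (fst (key b)) (snd (key b)))" for x using sf(7)[OF that] .
    show "b = svec T (fst (key b)) (snd (key b))" by (rule bs)
  qed
  show "u v0 = 0"
  proof (rule ccontr)
    assume nz: "u v0 \<noteq> 0"
    define t' where "t' = {b \<in> t. u b \<noteq> 0}"
    have ft': "finite t'" using ft by (simp add: t'_def)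
    have v0': "v0 \<in> t'" using v0 nz by (simp add: t'_def)
    have tB': "t' \<subseteq> Bset T n" using tB by (auto simp: t'_def)
    have s0': "(\<Sum>v\<in>t'. tsmul (u v) v) = 0"
    proof -
      have "(\<Sum>v\<in>t'. tsmul (u v) v) = (\<Sum>v\<in>t. tsmul (u v) v)"
        by (rule sum.mono_neutral_left[OF ft]) (auto simp: t'_def tsmul_def fun_eq_iff)
      thus ?thesis using s0 by simp
    qed
    obtain p where p: "p \<in> key ` t'" "\<forall>q\<in>key ` t'. q = p \<or> sqless q p"
      using sq_max[of "key ` t'"] ft' v0' by blast
    then obtain bs where bs: "bs \<in> t'" "key bs = p" by blast
    define i where "i = fst p"
    define g0 where "g0 = snd p"
    have trm: "u b * lk (b i) g0 = (if b = bs then u bs else 0)" if b: "b \<in> t'" for b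
    proof (cases "b = bs")
      case True
      have bsB: "bs \<in> Bset T n" using bs(1) tB' by blast
      have "bs i = vvec T i g0" using facts(1,5)[OF bsB] bs(2) by (simp add: i_def g0_def)
      moreover have "lk (vvec T i g0) g0 = 1" using facts(3)[OF bsB] bs(2) by (simp add: i_def g0_def)
      ultimately show ?thesis using True by simp
    next
      case False
      have bB: "b \<in> Bset T n" using b tB' by blast
      have "key b \<noteq> p"
      proof
        assume "key b = p"
        moreover have "bs \<in> Bset T n" using bs(1) tB' by blast
        ultimately have "b = bs" using facts(5)[OF bB] facts(5)[of bs] bs(2) by simp
        thus False using False by simp
      qed
      hence sq: "sqless (key b) p" using p(2) b by blast
      have "lk (b i) g0 = 0"
      proof (cases "fst (key b) < i")
        case True thus ?thesis using facts(2)[OF bB True] by simp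
      next
        case False
        hence fi: "fst (key b) = i" and sl: "snd (key b) < g0" using sq by (auto simp: sqless_def i_def g0_def)
        have "b i = vvec T i (snd (key b))" using facts(1,5)[OF bB] fi by simp
        moreover have "g0 \<notin> pk (vvec T i (snd (key b)))"
        proof
          assume "g0 \<in> pk (vvec T i (snd (key b)))"
          hence "g0 \<le> snd (key b)" using facts(4)[OF bB] fi by simp
          thus False using sl by simp
        qed
        ultimately show ?thesis by (simp add: in_keys_iff)
      qed
      thus ?thesis using False by simp
    qed
    have "0 = lk ((\<Sum>v\<in>t'. tsmul (u v) v) i) g0" using s0' by simp
    also have "\<dots> = (\<Sum>b\<in>t'. u b * lk (b i) g0)" by (simp add: sum_fun_apply lookup_sum)
    also have "\<dots> = (\<Sum>b\<in>t'. if b = bs then u bs else 0)" by (rule sum.cong[OF refl]) (rule trm)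
    also have "\<dots> = u bs" using ft' bs(1) by simp
    finally show False using bs(1) by (simp add: t'_def)
  qed
qed

theorem mainTheorem3:
  fixes T :: "nat \<Rightarrow> ('g::wellorder \<Rightarrow>\<^sub>0 'k::field) \<Rightarrow> ('g \<Rightarrow>\<^sub>0 'k)"
    and n :: nat
  assumes "n \<ge> 1"
    and "\<forall>j\<in>{1..n}. reduction_op (T j)"
  shows "module.independent tsmul (Bset T n) \<and> module.span tsmul (Bset T n) = syz T n"
proof
  have R: "\<And>j. j \<in> {1..n} \<Longrightarrow> redop (T j)" using assms(2) redopI by blast
  show "module.independent tsmul (Bset T n)" by (rule Bset_indep[OF R])
  interpret F: famk T n using R by (rule famkI)
  show "module.span tsmul (Bset T n) = syz T n"
  proof
    show "TP.span (Bset T n) \<subseteq> syz T n" by (rule TP.span_minimal[OF Bset_syz[OF R] F.syz_subspace])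
    show "syz T n \<subseteq> TP.span (Bset T n)" by (rule span_syz[OF assms(1) R])
  qed
qed


end
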